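(* Let $v\in\mathbb{R}$ and consider the system of ODEs for $(a,r,s)(\xi)\in\mathbb{R}^3$: $$\partial_\xi a=r,\qquad \partial_\xi r=-vr-\frac{sa}{2}+\frac{a|r|}{2},\qquad \partial_\xi s=-vs-ra.$$ Then each of the sets $I_1=\{r>0,\ s=2r\}$, $I_2=\{r>0,\ s=-r\}$, $I_3=\{r<0,\ s=r\}$, $I_4=\{r<0,\ s=-2r\}$ is invariant under the flow of this system, and so is each of the regions $R_1=\{s\ge-2r,\ s\ge 2r\}$, $R_2=\{s\le 2r,\ s\ge -r\}$, $R_3=\{s\le -r,\ s\le r\}$, $R_4=\{s\ge r,\ s\le-2r\}$.
   Context: Invariant means: any solution passing through a point of the set stays in the set for all $\xi$ in its interval of existence. The right-hand side of the system is locally Lipschitz, so solutions exist and are unique. *)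

theory Defs
  imports "HOL-Analysis.Analysis"
begin

definition rhs :: "real \<Rightarrow> real \<times> real \<times> real \<Rightarrow> real \<times> real \<times> real" where
  "rhs v = (\<lambda>(a, r, s). (r, - v * r - s * a / 2 + a * \<bar>r\<bar> / 2, - v * s - r * a))"

definition is_solution :: "real \<Rightarrow> (real \<Rightarrow> real \<times> real \<times> real) \<Rightarrow> real set \<Rightarrow> bool" where
  "is_solution v x T \<longleftrightarrow> is_interval T \<and>
     (\<forall>t\<in>T. (x has_vector_derivative rhs v (x t)) (at t within T))"

definition invariant :: "real \<Rightarrow> (real \<times> real \<times> real) set \<Rightarrow> bool" where
  "invariant v S \<longleftrightarrow> (\<forall>x T t0. is_solution v x T \<and> t0 \<in> T \<and> x t0 \<in> S \<longrightarrow> (\<forall>t\<in>T. x t \<in> S))"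

end

theory Submission
  imports Defs
begin


lemma gronwall_zero:
  fixes f f' :: "real \<Rightarrow> real"
  assumes J: "is_interval J" and t0: "t0 \<in> J" and f0: "f t0 = 0"
    and nn: "\<And>t. t \<in> J \<Longrightarrow> f t \<ge> 0"
    and d: "\<And>t. t \<in> J \<Longrightarrow> (f has_real_derivative f' t) (at t within J)"
    and b: "\<And>t. t \<in> J \<Longrightarrow> \<bar>f' t\<bar> \<le> K * f t"
    and t1: "t1 \<in> J"
  shows "f t1 = 0"
proof -
  have cf: "continuous_on J f" using d by (rule DERIV_continuous_on)
  have sub: "{a..b} \<subseteq> J" if "a \<in> J" "b \<in> J" for a b
  proof (rule subsetI)
    fix u assume "u \<in> {a..b}"
    then have "a \<le> u" "u \<le> b" by auto
    then show "u \<in> J" using J that unfolding is_interval_1 by blast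
  qed
  have dat: "(f has_real_derivative f' u) (at u)" if "a \<in> J" "b \<in> J" "a < u" "u < b" for a b u
  proof -
    have ss: "{a..b} \<subseteq> J" by (rule sub[OF that(1,2)])
    have "u \<in> {a..b}" using that(3,4) by simp
    then have "u \<in> J" using ss by blast
    have "{a<..<b} \<subseteq> {a..b}" by (rule greaterThanLessThan_subseteq_atLeastAtMost_iff[THEN iffD2]) simp
    then have "{a<..<b} \<subseteq> J" using ss by (rule order_trans)
    then have h: "(f has_real_derivative f' u) (at u within {a<..<b})"
      by (rule DERIV_subset[OF d[OF \<open>u \<in> J\<close>]])
    have eq: "at u within {a<..<b} = at u"
      by (rule at_within_open) (use that(3,4) in simp_all)
    show ?thesis using h unfolding eq .
  qed
  show ?thesis
  proof (cases "t0 \<le> t1")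
    case True
    let ?g = "\<lambda>u. f u * exp (- K * u)"
    have "?g t1 \<le> ?g t0"
    proof (rule DERIV_nonpos_imp_decreasing_open[OF True])
      fix u assume u: "t0 < u" "u < t1"
      have uJ: "u \<in> J" using sub[OF t0 t1] u by auto
      have e: "((\<lambda>u. exp (- K * u)) has_real_derivative exp (- K * u) * (- K)) (at u)"
        by (auto intro!: derivative_eq_intros)
      have "(?g has_real_derivative f' u * exp (- K * u) + exp (- K * u) * (- K) * f u) (at u)"
        by (rule DERIV_mult[OF dat[OF t0 t1 u] e])
      moreover have "f' u * exp (- K * u) + exp (- K * u) * (- K) * f u \<le> 0"
      proof -
        have "f' u \<le> K * f u" using b[OF uJ] by linarith
        then have "(f' u - K * f u) * exp (- K * u) \<le> 0"
          by (simp add: mult_nonpos_nonneg)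
        then show ?thesis by (simp add: algebra_simps)
      qed
      ultimately show "\<exists>y. (?g has_real_derivative y) (at u) \<and> y \<le> 0" by blast
    next
      show "continuous_on {t0..t1} ?g"
        by (rule continuous_on_mult[OF continuous_on_subset[OF cf sub[OF t0 t1]]]) (intro continuous_intros)
    qed
    then have "f t1 * exp (- K * t1) \<le> 0" using f0 by simp
    moreover have "f t1 * exp (- K * t1) \<ge> 0" using nn[OF t1] by simp
    ultimately show ?thesis by simp
  next
    case False
    then have le: "t1 \<le> t0" by simp
    let ?g = "\<lambda>u. f u * exp (K * u)"
    have "?g t1 \<le> ?g t0"
    proof (rule DERIV_nonneg_imp_increasing_open[OF le])
      fix u assume u: "t1 < u" "u < t0"
      have uJ: "u \<in> J" using sub[OF t1 t0] u by auto
      have e: "((\<lambda>u. exp (K * u)) has_real_derivative exp (K * u) * K) (at u)"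
        by (auto intro!: derivative_eq_intros)
      have "(?g has_real_derivative f' u * exp (K * u) + exp (K * u) * K * f u) (at u)"
        by (rule DERIV_mult[OF dat[OF t1 t0 u] e])
      moreover have "f' u * exp (K * u) + exp (K * u) * K * f u \<ge> 0"
      proof -
        have "f' u + K * f u \<ge> 0" using b[OF uJ] by linarith
        then have "(f' u + K * f u) * exp (K * u) \<ge> 0"
          by simp
        then show ?thesis by (simp add: algebra_simps)
      qed
      ultimately show "\<exists>y. (?g has_real_derivative y) (at u) \<and> y \<ge> 0" by blast
    next
      show "continuous_on {t1..t0} ?g"
        by (rule continuous_on_mult[OF continuous_on_subset[OF cf sub[OF t1 t0]]]) (intro continuous_intros)
    qed
    then have "f t1 * exp (K * t1) \<le> 0" using f0 by simp
    moreover have "f t1 * exp (K * t1) \<ge> 0" using nn[OF t1] by simp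
    ultimately show ?thesis by simp
  qed
qed


lemma components:
  assumes "(x has_vector_derivative rhs v (x t)) (at t within T)"
  shows "((\<lambda>u. fst (x u)) has_real_derivative fst (snd (x t))) (at t within T)"
    "((\<lambda>u. fst (snd (x u))) has_real_derivative
        (- v * fst (snd (x t)) - snd (snd (x t)) * fst (x t) / 2 + fst (x t) * \<bar>fst (snd (x t))\<bar> / 2)) (at t within T)"
    "((\<lambda>u. snd (snd (x u))) has_real_derivative
        (- v * snd (snd (x t)) - fst (snd (x t)) * fst (x t))) (at t within T)"
proof -
  obtain a r s where xt: "x t = (a, r, s)" by (cases "x t") auto
  have D: "(x has_vector_derivative (r, - v * r - s * a / 2 + a * \<bar>r\<bar> / 2, - v * s - r * a)) (at t within T)"
    using assms xt by (simp add: rhs_def)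
  have "((\<lambda>u. fst (x u)) has_vector_derivative fst (r, - v * r - s * a / 2 + a * \<bar>r\<bar> / 2, - v * s - r * a)) (at t within T)"
    by (rule bounded_linear.has_vector_derivative[OF bounded_linear_fst D])
  then show "((\<lambda>u. fst (x u)) has_real_derivative fst (snd (x t))) (at t within T)"
    by (simp add: xt has_real_derivative_iff_has_vector_derivative)
  have "((\<lambda>u. fst (snd (x u))) has_vector_derivative fst (snd (r, - v * r - s * a / 2 + a * \<bar>r\<bar> / 2, - v * s - r * a))) (at t within T)"
    by (rule bounded_linear.has_vector_derivative[OF bounded_linear_fst
          bounded_linear.has_vector_derivative[OF bounded_linear_snd D]])
  then show "((\<lambda>u. fst (snd (x u))) has_real_derivative
        (- v * fst (snd (x t)) - snd (snd (x t)) * fst (x t) / 2 + fst (x t) * \<bar>fst (snd (x t))\<bar> / 2)) (at t within T)"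
    by (simp add: xt has_real_derivative_iff_has_vector_derivative)
  have "((\<lambda>u. snd (snd (x u))) has_vector_derivative snd (snd (r, - v * r - s * a / 2 + a * \<bar>r\<bar> / 2, - v * s - r * a))) (at t within T)"
    by (rule bounded_linear.has_vector_derivative[OF bounded_linear_snd
          bounded_linear.has_vector_derivative[OF bounded_linear_snd D]])
  then show "((\<lambda>u. snd (snd (x u))) has_real_derivative
        (- v * snd (snd (x t)) - fst (snd (x t)) * fst (x t))) (at t within T)"
    by (simp add: xt has_real_derivative_iff_has_vector_derivative)
qed

lemma near_pos:
  fixes h :: "real \<Rightarrow> real"
  assumes "continuous (at t within T) h" "h t > 0"
  shows "\<exists>d>0. \<forall>u\<in>T. dist u t < d \<longrightarrow> h u > 0"
proof -
  have "eventually (\<lambda>u. h u > 0) (at t within T)"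
    using assms unfolding continuous_within by (rule order_tendstoD)
  then obtain d where d: "d > 0" "\<forall>u\<in>T. u \<noteq> t \<and> dist u t < d \<longrightarrow> h u > 0"
    unfolding eventually_at by blast
  have "\<forall>u\<in>T. dist u t < d \<longrightarrow> h u > 0"
  proof (intro ballI impI)
    fix u assume "u \<in> T" "dist u t < d"
    then show "h u > 0" using d assms(2) by (cases "u = t") auto
  qed
  then show ?thesis using d(1) by blast
qed



lemma line_local:
  fixes A R S :: "real \<Rightarrow> real" and \<sigma> k v :: real
  assumes T: "is_interval T" and t: "t \<in> T"
   and dA: "\<And>u. u \<in> T \<Longrightarrow> (A has_real_derivative R u) (at u within T)"
   and dR: "\<And>u. u \<in> T \<Longrightarrow> (R has_real_derivative (- v * R u - S u * A u / 2 + A u * \<bar>R u\<bar> / 2)) (at u within T)"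
   and dS: "\<And>u. u \<in> T \<Longrightarrow> (S has_real_derivative (- v * S u - R u * A u)) (at u within T)"
   and sig: "\<sigma> = 1 \<or> \<sigma> = -1" and kq: "k * k - \<sigma> * k - 2 = 0"
   and pos: "\<sigma> * R t > 0" and on: "S t = k * R t"
  shows "\<exists>d>0. \<forall>u\<in>T. dist u t < d \<longrightarrow> S u = k * R u \<and> \<sigma> * R u > 0"
proof -
  have cA: "continuous (at t within T) A" by (rule DERIV_continuous[OF dA[OF t]])
  have cR: "continuous (at t within T) R" by (rule DERIV_continuous[OF dR[OF t]])
  have "continuous (at t within T) (\<lambda>u. \<sigma> * R u)" by (intro continuous_intros cR)
  from near_pos[OF this] pos obtain d1 where d1: "d1 > 0" "\<forall>u\<in>T. dist u t < d1 \<longrightarrow> \<sigma> * R u > 0"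
    by blast
  have "continuous (at t within T) (\<lambda>u. \<bar>A t\<bar> + 1 - \<bar>A u\<bar>)" by (intro continuous_intros cA)
  from near_pos[OF this] obtain d2 where d2: "d2 > 0" "\<forall>u\<in>T. dist u t < d2 \<longrightarrow> \<bar>A t\<bar> + 1 - \<bar>A u\<bar> > 0"
    by auto
  define d where "d = min d1 d2"
  define J where "J = T \<inter> ball t d"
  have J: "is_interval J" unfolding J_def by (rule is_interval_Int[OF T is_interval_ball_real])
  have JT: "J \<subseteq> T" unfolding J_def by blast
  have tJ: "t \<in> J" using t d1(1) d2(1) by (simp add: J_def d_def)
  have inJ: "u \<in> T \<and> \<sigma> * R u > 0 \<and> \<bar>A u\<bar> \<le> \<bar>A t\<bar> + 1" if "u \<in> J" for u
  proof -
    from that have "u \<in> T" "dist u t < d1" "dist u t < d2"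
      by (auto simp: J_def d_def dist_commute)
    then show ?thesis using d1 d2 by force
  qed
  define w where "w = (\<lambda>u. S u - k * R u)"
  define w' where "w' = (\<lambda>u. (- v * S u - R u * A u) - k * (- v * R u - S u * A u / 2 + A u * \<bar>R u\<bar> / 2))"
  have dw: "(w has_real_derivative w' u) (at u within J)" if "u \<in> J" for u
  proof -
    have uT: "u \<in> T" using that JT by blast
    have "(w has_real_derivative w' u) (at u within T)"
      unfolding w_def w'_def by (rule DERIV_diff[OF dS[OF uT] DERIV_cmult[OF dR[OF uT]]])
    then show ?thesis using JT by (rule DERIV_subset)
  qed
  have w'eq: "w' u = (- v + k * A u / 2) * w u" if "u \<in> J" for u
  proof -
    have "\<sigma> * R u > 0" using inJ[OF that] by blast
    then have ab: "\<bar>R u\<bar> = \<sigma> * R u" using sig by auto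
    have "w' u - (- v + k * A u / 2) * w u = A u * R u * (k * k - \<sigma> * k - 2) / 2"
      unfolding w_def w'_def ab by (simp add: field_simps)
    then show ?thesis using kq by simp
  qed
  define f where "f = (\<lambda>u. w u * w u)"
  define f' where "f' = (\<lambda>u. w' u * w u + w' u * w u)"
  define K where "K = 2 * \<bar>v\<bar> + \<bar>k\<bar> * (\<bar>A t\<bar> + 1)"
  have df: "(f has_real_derivative f' u) (at u within J)" if "u \<in> J" for u
    unfolding f_def f'_def by (rule DERIV_mult[OF dw[OF that] dw[OF that]])
  have fb: "\<bar>f' u\<bar> \<le> K * f u" if "u \<in> J" for u
  proof -
    have e: "f' u = (- 2 * v + k * A u) * (w u * w u)"
      unfolding f'_def w'eq[OF that] by (simp add: algebra_simps)
    have ww: "w u * w u \<ge> 0" by simp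
    have "\<bar>- 2 * v + k * A u\<bar> \<le> 2 * \<bar>v\<bar> + \<bar>k\<bar> * \<bar>A u\<bar>"
      by (metis abs_mult abs_triangle_ineq abs_minus_cancel abs_numeral mult_minus_left)
    also have "\<dots> \<le> K" unfolding K_def
      using inJ[OF that] by (simp add: mult_left_mono)
    finally have "\<bar>- 2 * v + k * A u\<bar> \<le> K" .
    then have "\<bar>- 2 * v + k * A u\<bar> * (w u * w u) \<le> K * (w u * w u)"
      using ww by (rule mult_right_mono)
    then show ?thesis unfolding e f_def abs_mult using ww by simp
  qed
  have f0: "f t = 0" unfolding f_def w_def using on by simp
  have fz: "f u = 0" if "u \<in> J" for u
    by (rule gronwall_zero[OF J tJ f0 _ df fb that]) (simp_all add: f_def)
  show ?thesis
  proof (intro exI[of _ d] conjI ballI impI)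
    show "d > 0" using d1(1) d2(1) by (simp add: d_def)
  next
    fix u assume "u \<in> T" "dist u t < d"
    then have uJ: "u \<in> J" by (simp add: J_def dist_commute)
    show "S u = k * R u" using fz[OF uJ] by (simp add: f_def w_def)
    show "\<sigma> * R u > 0" using inJ[OF uJ] by blast
  qed
qed


lemma aux3: "2 * X \<le> a + b \<Longrightarrow> 0 \<le> a \<Longrightarrow> 0 \<le> b \<Longrightarrow> a + 3 * X \<le> 3 * (a + b)" for a b X :: real
  by (smt (verit))

lemma origin_local:
  fixes A R S :: "real \<Rightarrow> real" and v :: real
  assumes T: "is_interval T" and t: "t \<in> T"
   and dA: "\<And>u. u \<in> T \<Longrightarrow> (A has_real_derivative R u) (at u within T)"
   and dR: "\<And>u. u \<in> T \<Longrightarrow> (R has_real_derivative (- v * R u - S u * A u / 2 + A u * \<bar>R u\<bar> / 2)) (at u within T)"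
   and dS: "\<And>u. u \<in> T \<Longrightarrow> (S has_real_derivative (- v * S u - R u * A u)) (at u within T)"
   and z: "R t = 0" "S t = 0"
  shows "\<exists>d>0. \<forall>u\<in>T. dist u t < d \<longrightarrow> R u = 0 \<and> S u = 0"
proof -
  have cA: "continuous (at t within T) A" by (rule DERIV_continuous[OF dA[OF t]])
  have "continuous (at t within T) (\<lambda>u. \<bar>A t\<bar> + 1 - \<bar>A u\<bar>)" by (intro continuous_intros cA)
  from near_pos[OF this] obtain d where d: "d > 0" "\<forall>u\<in>T. dist u t < d \<longrightarrow> \<bar>A t\<bar> + 1 - \<bar>A u\<bar> > 0"
    by auto
  define J where "J = T \<inter> ball t d"
  have J: "is_interval J" unfolding J_def by (rule is_interval_Int[OF T is_interval_ball_real])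
  have JT: "J \<subseteq> T" unfolding J_def by blast
  have tJ: "t \<in> J" using t d(1) by (simp add: J_def)
  have inJ: "u \<in> T \<and> \<bar>A u\<bar> \<le> \<bar>A t\<bar> + 1" if "u \<in> J" for u
  proof -
    from that have "u \<in> T" "dist u t < d"
      by (auto simp: J_def dist_commute)
    then show ?thesis using d by force
  qed
  define R' where "R' = (\<lambda>u. - v * R u - S u * A u / 2 + A u * \<bar>R u\<bar> / 2)"
  define S' where "S' = (\<lambda>u. - v * S u - R u * A u)"
  define f where "f = (\<lambda>u. R u * R u + S u * S u)"
  define f' where "f' = (\<lambda>u. (R' u * R u + R' u * R u) + (S' u * S u + S' u * S u))"
  define K where "K = 2 * \<bar>v\<bar> + 3 * (\<bar>A t\<bar> + 1)"
  have df: "(f has_real_derivative f' u) (at u within J)" if "u \<in> J" for u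
  proof -
    have uT: "u \<in> T" using that JT by blast
    have "(f has_real_derivative f' u) (at u within T)"
      unfolding f_def f'_def R'_def S'_def
      by (rule DERIV_add[OF DERIV_mult[OF dR[OF uT] dR[OF uT]] DERIV_mult[OF dS[OF uT] dS[OF uT]]])
    then show ?thesis using JT by (rule DERIV_subset)
  qed
  have fb: "\<bar>f' u\<bar> \<le> K * f u" if "u \<in> J" for u
  proof -
    have e: "f' u = - 2 * v * f u + A u * (R u * \<bar>R u\<bar> - 3 * R u * S u)"
      unfolding f'_def f_def R'_def S'_def by (simp add: field_simps)
    have sq: "0 \<le> (\<bar>R u\<bar> - \<bar>S u\<bar>) * (\<bar>R u\<bar> - \<bar>S u\<bar>)" by simp
    have ab: "2 * (\<bar>R u\<bar> * \<bar>S u\<bar>) \<le> R u * R u + S u * S u"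
    proof -
      have "2 * (\<bar>R u\<bar> * \<bar>S u\<bar>) \<le> \<bar>R u\<bar> * \<bar>R u\<bar> + \<bar>S u\<bar> * \<bar>S u\<bar>"
        using sq by (simp add: algebra_simps)
      then show ?thesis by (simp add: abs_mult_self_eq)
    qed
    have fnn: "f u \<ge> 0" unfolding f_def by simp
    have "\<bar>R u * \<bar>R u\<bar> - 3 * R u * S u\<bar> \<le> \<bar>R u * \<bar>R u\<bar>\<bar> + \<bar>3 * R u * S u\<bar>"
      by (rule abs_triangle_ineq4)
    also have "\<dots> = R u * R u + 3 * (\<bar>R u\<bar> * \<bar>S u\<bar>)"
      by (simp add: abs_mult abs_mult_self_eq)
    also have "\<dots> \<le> 3 * f u" unfolding f_def by (rule aux3[OF ab zero_le_square zero_le_square])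
    finally have q: "\<bar>R u * \<bar>R u\<bar> - 3 * R u * S u\<bar> \<le> 3 * f u" .
    have "\<bar>f' u\<bar> \<le> \<bar>- 2 * v * f u\<bar> + \<bar>A u * (R u * \<bar>R u\<bar> - 3 * R u * S u)\<bar>"
      unfolding e by (rule abs_triangle_ineq)
    also have "\<bar>- 2 * v * f u\<bar> = 2 * \<bar>v\<bar> * f u" using fnn by (simp add: abs_mult)
    also have "\<bar>A u * (R u * \<bar>R u\<bar> - 3 * R u * S u)\<bar> \<le> (\<bar>A t\<bar> + 1) * (3 * f u)"
      unfolding abs_mult by (rule mult_mono) (use inJ[OF that] q in auto)
    finally show ?thesis unfolding K_def by (simp add: algebra_simps)
  qed
  have f0: "f t = 0" unfolding f_def using z by simp
  have fz: "f u = 0" if "u \<in> J" for u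
    by (rule gronwall_zero[OF J tJ f0 _ df fb that]) (simp_all add: f_def)
  show ?thesis
  proof (intro exI[of _ d] conjI ballI impI)
    show "d > 0" using d(1) .
  next
    fix u assume "u \<in> T" "dist u t < d"
    then have uJ: "u \<in> J" by (simp add: J_def dist_commute)
    have "R u * R u + S u * S u = 0" using fz[OF uJ] by (simp add: f_def)
    then show "R u = 0" "S u = 0" by (simp_all add: sum_squares_eq_zero_iff)
  qed
qed



lemma near_mono:
  assumes "\<exists>d>0. \<forall>u\<in>T. dist u t < d \<longrightarrow> P u" "\<And>u. u \<in> T \<Longrightarrow> P u \<Longrightarrow> Q u"
  shows "\<exists>d>0. \<forall>u\<in>T. dist u (t::real) < d \<longrightarrow> Q u"
  using assms by meson

lemma near_conj:
  assumes "\<exists>d>0. \<forall>u\<in>T. dist u t < d \<longrightarrow> P u" "\<exists>d>0. \<forall>u\<in>T. dist u t < d \<longrightarrow> Q u"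
  shows "\<exists>d>0. \<forall>u\<in>T. dist u (t::real) < d \<longrightarrow> P u \<and> Q u"
proof -
  obtain d1 where d1: "d1 > 0" "\<forall>u\<in>T. dist u t < d1 \<longrightarrow> P u" using assms(1) by blast
  obtain d2 where d2: "d2 > 0" "\<forall>u\<in>T. dist u t < d2 \<longrightarrow> Q u" using assms(2) by blast
  have "\<forall>u\<in>T. dist u t < min d1 d2 \<longrightarrow> P u \<and> Q u" using d1(2) d2(2) by simp
  moreover have "min d1 d2 > 0" using d1(1) d2(1) by simp
  ultimately show ?thesis by blast
qed

context
  fixes A R S :: "real \<Rightarrow> real" and v :: real and T :: "real set" and t :: real
  assumes T: "is_interval T" and t: "t \<in> T"
   and dA: "\<And>u. u \<in> T \<Longrightarrow> (A has_real_derivative R u) (at u within T)"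
   and dR: "\<And>u. u \<in> T \<Longrightarrow> (R has_real_derivative (- v * R u - S u * A u / 2 + A u * \<bar>R u\<bar> / 2)) (at u within T)"
   and dS: "\<And>u. u \<in> T \<Longrightarrow> (S has_real_derivative (- v * S u - R u * A u)) (at u within T)"
begin

lemma cR: "continuous (at t within T) R" by (rule DERIV_continuous[OF dR[OF t]])
lemma cS: "continuous (at t within T) S" by (rule DERIV_continuous[OF dS[OF t]])

lemma near_lin:
  assumes "c1 * R t + c2 * S t > 0"
  shows "\<exists>d>0. \<forall>u\<in>T. dist u t < d \<longrightarrow> c1 * R u + c2 * S u > 0"
proof -
  have "continuous (at t within T) (\<lambda>u. c1 * R u + c2 * S u)" by (intro continuous_intros cR cS)
  from near_pos[OF this assms] show ?thesis .
qed

lemma near_ne: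
  assumes "S t \<noteq> k * R t"
  shows "\<exists>d>0. \<forall>u\<in>T. dist u t < d \<longrightarrow> S u \<noteq> k * R u"
proof -
  have "continuous (at t within T) (\<lambda>u. \<bar>S u - k * R u\<bar>)" by (intro continuous_intros cR cS)
  from near_pos[OF this] assms obtain d where "d > 0" "\<forall>u\<in>T. dist u t < d \<longrightarrow> \<bar>S u - k * R u\<bar> > 0"
    by auto
  then show ?thesis by auto
qed

lemma Iset_local:
  assumes sig: "\<sigma> = 1 \<or> \<sigma> = -1" and kq: "k * k - \<sigma> * k - 2 = 0"
  shows "\<exists>d>0. \<forall>u\<in>T. dist u t < d \<longrightarrow> ((\<sigma> * R u > 0 \<and> S u = k * R u) \<longleftrightarrow> (\<sigma> * R t > 0 \<and> S t = k * R t))"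
proof (cases "\<sigma> * R t > 0 \<and> S t = k * R t")
  case True
  then have "\<exists>d>0. \<forall>u\<in>T. dist u t < d \<longrightarrow> S u = k * R u \<and> \<sigma> * R u > 0"
    using line_local[OF T t dA dR dS sig kq] by blast
  then show ?thesis by (rule near_mono) (use True in blast)
next
  case F: False
  show ?thesis
  proof (cases "S t = k * R t")
    case False
    from near_ne[OF this] show ?thesis by (rule near_mono) (use F in blast)
  next
    case True
    show ?thesis
    proof (cases "R t = 0")
      case z: True
      with True have "S t = 0" by simp
      from origin_local[OF T t dA dR dS z this] show ?thesis by (rule near_mono) (use F in auto)
    next
      case False
      then have "(- \<sigma>) * R t + 0 * S t > 0" using F True sig by auto
      from near_lin[OF this] show ?thesis by (rule near_mono) (use F in auto)
    qed
  qed
qed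

lemma Region_local:
  assumes sig1: "\<sigma>1 = 1 \<or> \<sigma>1 = -1" and kq1: "k1 * k1 - \<sigma>1 * k1 - 2 = 0"
    and sig2: "\<sigma>2 = 1 \<or> \<sigma>2 = -1" and kq2: "k2 * k2 - \<sigma>2 * k2 - 2 = 0"
    and h1: "\<And>r s. a1 * r + b1 * s = 0 \<Longrightarrow> a2 * r + b2 * s > 0 \<Longrightarrow> \<sigma>1 * r > 0 \<and> s = k1 * r"
    and h1': "\<And>r s. s = k1 * r \<Longrightarrow> a1 * r + b1 * s = 0"
    and h2: "\<And>r s. a2 * r + b2 * s = 0 \<Longrightarrow> a1 * r + b1 * s > 0 \<Longrightarrow> \<sigma>2 * r > 0 \<and> s = k2 * r"
    and h2': "\<And>r s. s = k2 * r \<Longrightarrow> a2 * r + b2 * s = 0"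
    and h0: "\<And>r s. a1 * r + b1 * s = 0 \<Longrightarrow> a2 * r + b2 * s = 0 \<Longrightarrow> r = 0 \<and> s = 0"
  shows "\<exists>d>0. \<forall>u\<in>T. dist u t < d \<longrightarrow>
     ((a1 * R u + b1 * S u \<ge> 0 \<and> a2 * R u + b2 * S u \<ge> 0) \<longleftrightarrow> (a1 * R t + b1 * S t \<ge> 0 \<and> a2 * R t + b2 * S t \<ge> 0))"
proof -
  consider "a1 * R t + b1 * S t < 0" | "a2 * R t + b2 * S t < 0"
    | "a1 * R t + b1 * S t > 0" "a2 * R t + b2 * S t > 0"
    | "a1 * R t + b1 * S t = 0" "a2 * R t + b2 * S t = 0"
    | "a1 * R t + b1 * S t = 0" "a2 * R t + b2 * S t > 0"
    | "a1 * R t + b1 * S t > 0" "a2 * R t + b2 * S t = 0"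
    by linarith
  then show ?thesis
  proof cases
    case 1
    then have "(- a1) * R t + (- b1) * S t > 0" by simp
    from near_lin[OF this] show ?thesis by (rule near_mono) (use 1 in auto)
  next
    case 2
    then have "(- a2) * R t + (- b2) * S t > 0" by simp
    from near_lin[OF this] show ?thesis by (rule near_mono) (use 2 in auto)
  next
    case 3
    from near_conj[OF near_lin[OF 3(1)] near_lin[OF 3(2)]] show ?thesis
      by (rule near_mono) (use 3 in auto)
  next
    case 4
    from h0[OF 4] have z: "R t = 0" "S t = 0" by auto
    from origin_local[OF T t dA dR dS z] show ?thesis by (rule near_mono) (use z in auto)
  next
    case 5
    from h1[OF 5] have "\<sigma>1 * R t > 0" "S t = k1 * R t" by auto
    then have "\<exists>d>0. \<forall>u\<in>T. dist u t < d \<longrightarrow> S u = k1 * R u \<and> \<sigma>1 * R u > 0"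
      using line_local[OF T t dA dR dS sig1 kq1] by blast
    from near_conj[OF this near_lin[OF 5(2)]] show ?thesis
    proof (rule near_mono)
      fix u assume "u \<in> T" "(S u = k1 * R u \<and> \<sigma>1 * R u > 0) \<and> a2 * R u + b2 * S u > 0"
      then have "a1 * R u + b1 * S u = 0" "a2 * R u + b2 * S u > 0" using h1' by auto
      then show "((a1 * R u + b1 * S u \<ge> 0 \<and> a2 * R u + b2 * S u \<ge> 0) \<longleftrightarrow> (a1 * R t + b1 * S t \<ge> 0 \<and> a2 * R t + b2 * S t \<ge> 0))"
        using 5 by auto
    qed
  next
    case 6
    from h2[OF 6(2) 6(1)] have "\<sigma>2 * R t > 0" "S t = k2 * R t" by auto
    then have "\<exists>d>0. \<forall>u\<in>T. dist u t < d \<longrightarrow> S u = k2 * R u \<and> \<sigma>2 * R u > 0"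
      using line_local[OF T t dA dR dS sig2 kq2] by blast
    from near_conj[OF this near_lin[OF 6(1)]] show ?thesis
    proof (rule near_mono)
      fix u assume "u \<in> T" "(S u = k2 * R u \<and> \<sigma>2 * R u > 0) \<and> a1 * R u + b1 * S u > 0"
      then have "a2 * R u + b2 * S u = 0" "a1 * R u + b1 * S u > 0" using h2' by auto
      then show "((a1 * R u + b1 * S u \<ge> 0 \<and> a2 * R u + b2 * S u \<ge> 0) \<longleftrightarrow> (a1 * R t + b1 * S t \<ge> 0 \<and> a2 * R t + b2 * S t \<ge> 0))"
        using 6 by auto
    qed
  qed
qed

end



lemma inv_local:
  assumes "\<And>x T t. is_solution v x T \<Longrightarrow> t \<in> T \<Longrightarrow> \<exists>d>0. \<forall>u\<in>T. dist u t < d \<longrightarrow> (x u \<in> P \<longleftrightarrow> x t \<in> P)"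
  shows "invariant v P"
  unfolding invariant_def
proof (intro allI impI ballI)
  fix x T t0 t
  assume H: "is_solution v x T \<and> t0 \<in> T \<and> x t0 \<in> P" and t: "t \<in> T"
  have conn: "connected T" using H is_interval_connected unfolding is_solution_def by blast
  show "x t \<in> P"
  proof (rule connected_induction_simple[OF conn, of t0 t "\<lambda>u. x u \<in> P"])
    show "t0 \<in> T" "t \<in> T" "x t0 \<in> P" using H t by auto
  next
    fix a assume a: "a \<in> T"
    obtain d where d: "d > 0" "\<forall>u\<in>T. dist u a < d \<longrightarrow> (x u \<in> P \<longleftrightarrow> x a \<in> P)"
      using assms[of x T a] H a by blast
    show "\<exists>U. openin (top_of_set T) U \<and> a \<in> U \<and> (\<forall>y\<in>U. \<forall>z\<in>U. x y \<in> P \<longrightarrow> x z \<in> P)"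
    proof (intro exI[of _ "T \<inter> ball a d"] conjI)
      show "openin (top_of_set T) (T \<inter> ball a d)" by (rule openin_open_Int[OF open_ball])
      show "a \<in> T \<inter> ball a d" using a d(1) by simp
      show "\<forall>y\<in>T \<inter> ball a d. \<forall>z\<in>T \<inter> ball a d. x y \<in> P \<longrightarrow> x z \<in> P"
        using d(2) by (auto simp: dist_commute)
    qed
  qed
qed

lemma sol_derivs:
  assumes "is_solution v x T"
  shows "is_interval T"
    "\<And>u. u \<in> T \<Longrightarrow> ((\<lambda>u. fst (x u)) has_real_derivative fst (snd (x u))) (at u within T)"
    "\<And>u. u \<in> T \<Longrightarrow> ((\<lambda>u. fst (snd (x u))) has_real_derivative
        (- v * fst (snd (x u)) - snd (snd (x u)) * fst (x u) / 2 + fst (x u) * \<bar>fst (snd (x u))\<bar> / 2)) (at u within T)"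
    "\<And>u. u \<in> T \<Longrightarrow> ((\<lambda>u. snd (snd (x u))) has_real_derivative
        (- v * snd (snd (x u)) - fst (snd (x u)) * fst (x u))) (at u within T)"
  using assms components unfolding is_solution_def by blast+

lemma Iset_inv:
  assumes sig: "\<sigma> = 1 \<or> \<sigma> = -1" and kq: "k * k - \<sigma> * k - 2 = 0"
    and P: "\<And>a r s. (a, r, s) \<in> P \<longleftrightarrow> (\<sigma> * r > 0 \<and> s = k * r)"
  shows "invariant v P"
proof (rule inv_local)
  fix x T t assume sol: "is_solution v x T" and t: "t \<in> T"
  have mem: "x u \<in> P \<longleftrightarrow> (\<sigma> * fst (snd (x u)) > 0 \<and> snd (snd (x u)) = k * fst (snd (x u)))" for u
    using P[of "fst (x u)" "fst (snd (x u))" "snd (snd (x u))"] by simp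
  show "\<exists>d>0. \<forall>u\<in>T. dist u t < d \<longrightarrow> (x u \<in> P \<longleftrightarrow> x t \<in> P)"
    unfolding mem by (rule Iset_local[OF sol_derivs(1)[OF sol] t sol_derivs(2-4)[OF sol] sig kq])
qed

lemma Region_inv:
  assumes sig1: "sgA = 1 \<or> sgA = -1" and kq1: "kA * kA - sgA * kA - 2 = 0"
    and sig2: "sgB = 1 \<or> sgB = -1" and kq2: "kB * kB - sgB * kB - 2 = 0"
    and h1: "\<And>r s. pA * r + pB * s = 0 \<Longrightarrow> qA * r + qB * s > 0 \<Longrightarrow> sgA * r > 0 \<and> s = kA * r"
    and h1': "\<And>r s. s = kA * r \<Longrightarrow> pA * r + pB * s = 0"
    and h2: "\<And>r s. qA * r + qB * s = 0 \<Longrightarrow> pA * r + pB * s > 0 \<Longrightarrow> sgB * r > 0 \<and> s = kB * r"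
    and h2': "\<And>r s. s = kB * r \<Longrightarrow> qA * r + qB * s = 0"
    and h0: "\<And>r s. pA * r + pB * s = 0 \<Longrightarrow> qA * r + qB * s = 0 \<Longrightarrow> r = 0 \<and> s = 0"
    and P: "\<And>a r s. (a, r, s) \<in> P \<longleftrightarrow> (pA * r + pB * s \<ge> 0 \<and> qA * r + qB * s \<ge> 0)"
  shows "invariant v P"
proof (rule inv_local)
  fix x T t assume sol: "is_solution v x T" and t: "t \<in> T"
  have mem: "x u \<in> P \<longleftrightarrow> (pA * fst (snd (x u)) + pB * snd (snd (x u)) \<ge> 0 \<and> qA * fst (snd (x u)) + qB * snd (snd (x u)) \<ge> 0)" for u
    using P[of "fst (x u)" "fst (snd (x u))" "snd (snd (x u))"] by simp
  show "\<exists>d>0. \<forall>u\<in>T. dist u t < d \<longrightarrow> (x u \<in> P \<longleftrightarrow> x t \<in> P)"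
    unfolding mem by (rule Region_local[OF sol_derivs(1)[OF sol] t sol_derivs(2-4)[OF sol] sig1 kq1 sig2 kq2 h1 h1' h2 h2' h0])
qed

theorem proposition1:
  fixes v :: real
  shows "invariant v {(a, r, s). r > 0 \<and> s = 2 * r}
     \<and> invariant v {(a, r, s). r > 0 \<and> s = - r}
     \<and> invariant v {(a, r, s). r < 0 \<and> s = r}
     \<and> invariant v {(a, r, s). r < 0 \<and> s = - 2 * r}
     \<and> invariant v {(a, r, s). s \<ge> - 2 * r \<and> s \<ge> 2 * r}
     \<and> invariant v {(a, r, s). s \<le> 2 * r \<and> s \<ge> - r}
     \<and> invariant v {(a, r, s). s \<le> - r \<and> s \<le> r}
     \<and> invariant v {(a, r, s). s \<ge> r \<and> s \<le> - 2 * r}"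
proof (intro conjI)
  show "invariant v {(a, r, s). r > 0 \<and> s = 2 * r}"
    by (rule Iset_inv[where \<sigma>=1 and k=2]) auto
  show "invariant v {(a, r, s). r > 0 \<and> s = - r}"
    by (rule Iset_inv[where \<sigma>=1 and k="-1"]) auto
  show "invariant v {(a, r, s). r < 0 \<and> s = r}"
    by (rule Iset_inv[where \<sigma>="-1" and k=1]) auto
  show "invariant v {(a, r, s). r < 0 \<and> s = - 2 * r}"
    by (rule Iset_inv[where \<sigma>="-1" and k="-2"]) auto
  show "invariant v {(a, r, s). s \<ge> - 2 * r \<and> s \<ge> 2 * r}"
    by (rule Region_inv[where pA=2 and pB=1 and qA="-2" and qB=1 and sgA="-1" and kA="-2" and sgB=1 and kB=2]) auto
  show "invariant v {(a, r, s). s \<le> 2 * r \<and> s \<ge> - r}"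
    by (rule Region_inv[where pA=2 and pB="-1" and qA=1 and qB=1 and sgA=1 and kA=2 and sgB=1 and kB="-1"]) auto
  show "invariant v {(a, r, s). s \<le> - r \<and> s \<le> r}"
    by (rule Region_inv[where pA="-1" and pB="-1" and qA=1 and qB="-1" and sgA=1 and kA="-1" and sgB="-1" and kB=1]) auto
  show "invariant v {(a, r, s). s \<ge> r \<and> s \<le> - 2 * r}"
    by (rule Region_inv[where pA="-1" and pB=1 and qA="-2" and qB="-1" and sgA="-1" and kA=1 and sgB="-1" and kB="-2"]) auto
qed

end
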